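(* For any graph $G$, $\Gamma(G)\le\Gamma(G\uparrow\mathcal{B})$.
   Context: Graphs are finite and simple. A Grundy-coloring of $G$ is a proper coloring with nonempty color classes $C_1,\ldots,C_k$ such that for $i<j$ each vertex of $C_j$ has a neighbor in $C_i$; $\Gamma(G)$ is the maximum number of colors of a Grundy-coloring. A block of $G$ is a maximal 2-connected subgraph or a bridge (as a $K_2$). $G\uparrow\mathcal{B}$ is the graph on $V(G)$ obtained from $G$ by adding an edge between every two non-adjacent vertices that belong to a same block of $G$ (so every block becomes a clique). *)

theory Defs
  imports Main
begin

definition simple_graph :: "'a set \<Rightarrow> 'a set set \<Rightarrow> bool" where
  "simple_graph V E \<longleftrightarrow> finite V \<and>
     (\<forall>e\<in>E. \<exists>x y. x \<noteq> y \<and> x \<in> V \<and> y \<in> V \<and> e = {x, y})"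

text \<open>Grundy colouring with colour classes C_1..C_k (class C_i = vertices of colour i).\<close>

definition grundy_coloring :: "'a set \<Rightarrow> 'a set set \<Rightarrow> ('a \<Rightarrow> nat) \<Rightarrow> nat \<Rightarrow> bool" where
  "grundy_coloring V E c k \<longleftrightarrow>
     (\<forall>v\<in>V. c v \<in> {1..k}) \<and>
     (\<forall>i\<in>{1..k}. \<exists>v\<in>V. c v = i) \<and>
     (\<forall>x y. {x, y} \<in> E \<longrightarrow> c x \<noteq> c y) \<and>
     (\<forall>v\<in>V. \<forall>i. 1 \<le> i \<and> i < c v \<longrightarrow> (\<exists>u\<in>V. {u, v} \<in> E \<and> c u = i))"

definition grundy_number :: "'a set \<Rightarrow> 'a set set \<Rightarrow> nat" where
  "grundy_number V E = Max {k. \<exists>c. grundy_coloring V E c k}"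

definition connected_graph :: "'a set \<Rightarrow> 'a set set \<Rightarrow> bool" where
  "connected_graph S F \<longleftrightarrow> S \<noteq> {} \<and>
     (\<forall>x\<in>S. \<forall>y\<in>S. (\<lambda>a b. {a, b} \<in> F \<and> a \<in> S \<and> b \<in> S)\<^sup>*\<^sup>* x y)"

definition subgraph :: "'a set \<Rightarrow> 'a set set \<Rightarrow> 'a set \<Rightarrow> 'a set set \<Rightarrow> bool" where
  "subgraph S F V E \<longleftrightarrow> S \<subseteq> V \<and> F \<subseteq> E \<and> (\<forall>e\<in>F. e \<subseteq> S)"

definition two_connected :: "'a set \<Rightarrow> 'a set set \<Rightarrow> bool" where
  "two_connected S F \<longleftrightarrow> card S \<ge> 3 \<and> connected_graph S F \<and>
     (\<forall>v\<in>S. connected_graph (S - {v}) {e\<in>F. v \<notin> e})"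

definition bridge :: "'a set \<Rightarrow> 'a set set \<Rightarrow> 'a \<Rightarrow> 'a \<Rightarrow> bool" where
  "bridge V E x y \<longleftrightarrow> {x, y} \<in> E \<and>
     \<not> (\<lambda>a b. {a, b} \<in> E - {{x, y}} \<and> a \<in> V \<and> b \<in> V)\<^sup>*\<^sup>* x y"

definition is_block :: "'a set \<Rightarrow> 'a set set \<Rightarrow> 'a set \<Rightarrow> bool" where
  "is_block V E B \<longleftrightarrow>
     (\<exists>F. subgraph B F V E \<and> two_connected B F \<and>
        (\<forall>S' F'. subgraph S' F' V E \<and> two_connected S' F' \<and> B \<subseteq> S' \<and> F \<subseteq> F'
           \<longrightarrow> S' = B \<and> F' = F))
     \<or> (\<exists>x y. bridge V E x y \<and> B = {x, y})"

text \<open>G \<up> B: add every edge between distinct non-adjacent vertices in a common block.\<close>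

definition block_closure :: "'a set \<Rightarrow> 'a set set \<Rightarrow> 'a set set" where
  "block_closure V E = E \<union> {{x, y} | x y. x \<noteq> y \<and> (\<exists>B. is_block V E B \<and> x \<in> B \<and> y \<in> B)}"

end

theory Submission
  imports Defs "HOL-Library.Transitive_Closure_Table"
begin

definition cn :: "'a set set \<Rightarrow> 'a set \<Rightarrow> 'a \<Rightarrow> 'a \<Rightarrow> bool" where
  "cn F S = (\<lambda>a b. {a, b} \<in> F \<and> a \<in> S \<and> b \<in> S)\<^sup>*\<^sup>*"

lemma cn_refl[simp]: "cn F S a a"
  by (simp add: cn_def)

lemma cn_trans: "cn F S a b \<Longrightarrow> cn F S b c \<Longrightarrow> cn F S a c"
  unfolding cn_def by (rule rtranclp_trans)

lemma cn_sym: assumes "cn F S a b" shows "cn F S b a"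
  using assms unfolding cn_def
proof (induction rule: rtranclp_induct)
  case base then show ?case by simp
next
  case (step y z)
  have "(\<lambda>a b. {a, b} \<in> F \<and> a \<in> S \<and> b \<in> S) z y" using step(2) by (simp add: insert_commute)
  then show ?case using step(3) by (rule converse_rtranclp_into_rtranclp)
qed

lemma cn_mono: assumes "cn F S a b" "F \<subseteq> F'" "S \<subseteq> S'" shows "cn F' S' a b"
  using assms(1) unfolding cn_def
  by (rule rtranclp_mono[THEN predicate2D, rotated]) (use assms in auto)

lemma cn_edge: "{a, b} \<in> F \<Longrightarrow> a \<in> S \<Longrightarrow> b \<in> S \<Longrightarrow> cn F S a b"
  unfolding cn_def by auto

lemma cn_mem: assumes "cn F S a b" "a \<noteq> b" shows "a \<in> S" "b \<in> S"
  using assms unfolding cn_def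
  by (auto elim: converse_rtranclpE rtranclp.cases)

lemma chain_conn:
  assumes "\<forall>l. i \<le> l \<and> l < j \<longrightarrow> R (ps!l) (ps!Suc l)" "i \<le> j"
  shows "R\<^sup>*\<^sup>* (ps!i) (ps!j)"
  using assms
proof (induction j)
  case 0 then show ?case by simp
next
  case (Suc j)
  show ?case
  proof (cases "i = Suc j")
    case True then show ?thesis by simp
  next
    case False
    then have "R\<^sup>*\<^sup>* (ps!i) (ps!j)" using Suc by auto
    moreover have "R (ps!j) (ps!Suc j)" using Suc.prems False by auto
    ultimately show ?thesis by auto
  qed
qed

lemma get_path:
  assumes "R\<^sup>*\<^sup>* a b"
  obtains ps where "ps \<noteq> []" "ps!0 = a" "last ps = b" "distinct ps"
    "\<forall>i. Suc i < length ps \<longrightarrow> R (ps!i) (ps!Suc i)"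
proof -
  obtain xs where "rtrancl_path R a xs b" using assms rtranclp_eq_rtrancl_path by metis
  then obtain xs' where p: "rtrancl_path R a xs' b" "distinct (a # xs')"
    using rtrancl_path_distinct by metis
  have l: "last (a # xs') = b"
  proof (cases "xs' = []")
    case True then show ?thesis using p(1) by (auto elim: rtrancl_path.cases)
  next
    case False then show ?thesis using p(1) rtrancl_path_last by fastforce
  qed
  have "\<forall>i. Suc i < length (a # xs') \<longrightarrow> R ((a # xs')!i) ((a # xs')!Suc i)"
    using rtrancl_path_nth[OF p(1)] by auto
  then show ?thesis using that[of "a # xs'"] p l by auto
qed

lemma last_idx: "ps \<noteq> [] \<Longrightarrow> last ps = ps ! (length ps - 1)"
  by (simp add: last_conv_nth)

lemma tc_del_rel:
  "(\<lambda>a b. {a, b} \<in> {e \<in> F. v \<notin> e} \<and> a \<in> S - {v} \<and> b \<in> S - {v}) =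
   (\<lambda>a b. {a, b} \<in> F \<and> a \<in> S - {v} \<and> b \<in> S - {v})"
  by (auto simp: fun_eq_iff)

lemma two_connected_iff:
  "two_connected S F \<longleftrightarrow> card S \<ge> 3 \<and>
     (\<forall>v\<in>S. \<forall>a\<in>S - {v}. \<forall>b\<in>S - {v}. cn F (S - {v}) a b)"
proof
  assume h: "two_connected S F"
  then show "card S \<ge> 3 \<and> (\<forall>v\<in>S. \<forall>a\<in>S - {v}. \<forall>b\<in>S - {v}. cn F (S - {v}) a b)"
    unfolding two_connected_def connected_graph_def cn_def tc_del_rel by blast
next
  assume h: "card S \<ge> 3 \<and> (\<forall>v\<in>S. \<forall>a\<in>S - {v}. \<forall>b\<in>S - {v}. cn F (S - {v}) a b)"
  then have fin: "finite S" using card.infinite by fastforce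
  have ne: "S - {v} \<noteq> {}" for v
  proof
    assume "S - {v} = {}"
    then have "S \<subseteq> {v}" by auto
    then have "card S \<le> 1" using card_mono[of "{v}" S] by auto
    then show False using h by auto
  qed
  have conn: "cn F S a b" if "a \<in> S" "b \<in> S" for a b
  proof (cases "a = b")
    case True then show ?thesis by simp
  next
    case False
    have "card {a, b} = 2" using False by simp
    then have "\<not> S \<subseteq> {a, b}" using h card_mono[of "{a,b}" S] by auto
    then obtain v where v: "v \<in> S" "v \<noteq> a" "v \<noteq> b" by blast
    then have "cn F (S - {v}) a b" using h that by auto
    then show ?thesis by (rule cn_mono) auto
  qed
  have "connected_graph S F"
    unfolding connected_graph_def using conn ne[of undefined] by (auto simp: cn_def)
  moreover have "connected_graph (S - {v}) {e \<in> F. v \<notin> e}" if "v \<in> S" for v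
    unfolding connected_graph_def tc_del_rel using ne[of v] h that by (auto simp: cn_def)
  ultimately show "two_connected S F"
    unfolding two_connected_def using h by blast
qed

lemma cn_induced: "T \<subseteq> S \<Longrightarrow> cn {e \<in> E. e \<subseteq> S} T = cn E T"
  unfolding cn_def by (rule arg_cong[where f="\<lambda>r. r\<^sup>*\<^sup>*"]) (auto simp: fun_eq_iff)

lemma TC:
  assumes "S \<subseteq> V" "card S \<ge> 3"
    "\<forall>v\<in>S. \<forall>a\<in>S - {v}. \<forall>b\<in>S - {v}. cn E (S - {v}) a b"
  shows "subgraph S {e \<in> E. e \<subseteq> S} V E \<and> two_connected S {e \<in> E. e \<subseteq> S}"
proof
  show "subgraph S {e \<in> E. e \<subseteq> S} V E" using assms(1) unfolding subgraph_def by auto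
  show "two_connected S {e \<in> E. e \<subseteq> S}"
    unfolding two_connected_iff using assms(2,3) by (auto simp: cn_induced)
qed

lemma sub2c_cn:
  assumes "subgraph S F V E" "two_connected S F" "a \<in> S - {v}" "b \<in> S - {v}"
  shows "cn E (S - {v}) a b"
proof (cases "v \<in> S")
  case True
  then have "cn F (S - {v}) a b" using assms two_connected_iff by metis
  then show ?thesis by (rule cn_mono) (use assms(1) in \<open>auto simp: subgraph_def\<close>)
next
  case False
  have "card S \<ge> 3" using assms two_connected_iff by metis
  then have "connected_graph S F" using assms(2) unfolding two_connected_def by auto
  then have "cn F S a b" using assms unfolding connected_graph_def cn_def by auto
  then show ?thesis using False by (rule_tac cn_mono) (use assms(1) in \<open>auto simp: subgraph_def\<close>)
qed

lemma cn_avoid_bridge: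
  assumes "cn E T a b" "T \<subseteq> V" "y \<notin> T"
  shows "(\<lambda>a b. {a, b} \<in> E - {{x, y}} \<and> a \<in> V \<and> b \<in> V)\<^sup>*\<^sup>* a b"
  using assms(1) unfolding cn_def
  by (rule rtranclp_mono[THEN predicate2D, rotated]) (use assms in \<open>auto simp: doubleton_eq_iff\<close>)

lemma cn_avoid_bridge2:
  assumes "cn E T a b" "T \<subseteq> V" "x \<notin> T"
  shows "(\<lambda>a b. {a, b} \<in> E - {{x, y}} \<and> a \<in> V \<and> b \<in> V)\<^sup>*\<^sup>* a b"
  using assms(1) unfolding cn_def
  by (rule rtranclp_mono[THEN predicate2D, rotated]) (use assms in \<open>auto simp: doubleton_eq_iff\<close>)

lemma bridge_no2c:
  assumes "bridge V E x y" "subgraph S F V E" "two_connected S F" "x \<in> S" "y \<in> S"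
  shows False
proof -
  have xy: "x \<noteq> y" using assms(1) unfolding bridge_def by auto
  have "card S \<ge> 3" using assms two_connected_iff by metis
  moreover have "card {x, y} = 2" using xy by simp
  ultimately have "\<not> S \<subseteq> {x, y}" using card_mono[of "{x,y}" S] by fastforce
  then obtain z where z: "z \<in> S" "z \<noteq> x" "z \<noteq> y" by blast
  have SV: "S \<subseteq> V" using assms(2) unfolding subgraph_def by auto
  have "cn E (S - {y}) x z" using sub2c_cn[OF assms(2,3)] z assms xy by auto
  then have 1: "(\<lambda>a b. {a, b} \<in> E - {{x, y}} \<and> a \<in> V \<and> b \<in> V)\<^sup>*\<^sup>* x z"
    by (rule cn_avoid_bridge) (use SV in auto)
  have "cn E (S - {x}) z y" using sub2c_cn[OF assms(2,3)] z assms xy by auto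
  then have 2: "(\<lambda>a b. {a, b} \<in> E - {{x, y}} \<and> a \<in> V \<and> b \<in> V)\<^sup>*\<^sup>* z y"
    by (rule cn_avoid_bridge2) (use SV in auto)
  from 1 2 have "(\<lambda>a b. {a, b} \<in> E - {{x, y}} \<and> a \<in> V \<and> b \<in> V)\<^sup>*\<^sup>* x y" by auto
  then show False using assms(1) unfolding bridge_def by auto
qed

lemma union_2c:
  assumes "two_connected S1 F1" "two_connected S2 F2" "a \<noteq> b" "a \<in> S1" "a \<in> S2" "b \<in> S1" "b \<in> S2"
  shows "two_connected (S1 \<union> S2) (F1 \<union> F2)"
proof -
  have c1: "card S1 \<ge> 3" and c2: "card S2 \<ge> 3" using assms two_connected_iff by metis+
  then have f: "finite S1" "finite S2" using card.infinite by fastforce+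
  have g: "connected_graph S1 F1" "connected_graph S2 F2" using assms(1,2) unfolding two_connected_def by auto
  have "card (S1 \<union> S2) \<ge> 3" using c1 card_mono[of "S1 \<union> S2" S1] f by auto
  moreover have "cn (F1 \<union> F2) (S1 \<union> S2 - {v}) x y"
    if "v \<in> S1 \<union> S2" "x \<in> S1 \<union> S2 - {v}" "y \<in> S1 \<union> S2 - {v}" for v x y
  proof -
    have "\<exists>w. w \<in> S1 \<and> w \<in> S2 \<and> w \<noteq> v"
    proof (cases "v = a")
      case True then show ?thesis using assms by blast
    next
      case False then show ?thesis using assms by blast
    qed
    then obtain w where w: "w \<in> S1" "w \<in> S2" "w \<noteq> v" by blast
    have k1: "cn (F1 \<union> F2) (S1 \<union> S2 - {v}) z w" if z: "z \<in> S1 - {v}" for z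
    proof (cases "v \<in> S1")
      case True
      then have "cn F1 (S1 - {v}) z w" using assms(1) unfolding two_connected_iff using z w by blast
      then show ?thesis by (rule cn_mono) auto
    next
      case False
      have "cn F1 S1 z w" using g(1) z w unfolding connected_graph_def cn_def by auto
      then show ?thesis by (rule cn_mono) (use False in auto)
    qed
    have k2: "cn (F1 \<union> F2) (S1 \<union> S2 - {v}) z w" if z: "z \<in> S2 - {v}" for z
    proof (cases "v \<in> S2")
      case True
      then have "cn F2 (S2 - {v}) z w" using assms(2) unfolding two_connected_iff using z w by blast
      then show ?thesis by (rule cn_mono) auto
    next
      case False
      have "cn F2 S2 z w" using g(2) z w unfolding connected_graph_def cn_def by auto
      then show ?thesis by (rule cn_mono) (use False in auto)
    qed
    have 1: "cn (F1 \<union> F2) (S1 \<union> S2 - {v}) x w" using k1 k2 that(2) by blast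
    have 2: "cn (F1 \<union> F2) (S1 \<union> S2 - {v}) y w" using k1 k2 that(3) by blast
    show ?thesis using cn_trans[OF 1 cn_sym[OF 2]] .
  qed
  ultimately show ?thesis unfolding two_connected_iff by blast
qed

lemma L:
  assumes "is_block V E B" "subgraph S F V E" "two_connected S F" "a \<noteq> b"
    "a \<in> S" "b \<in> S" "a \<in> B" "b \<in> B"
  shows "S \<subseteq> B"
  using assms(1) unfolding is_block_def
proof (elim disjE exE conjE)
  fix FB
  assume sb: "subgraph B FB V E" and tc: "two_connected B FB"
    and mx: "\<forall>S' F'. subgraph S' F' V E \<and> two_connected S' F' \<and> B \<subseteq> S' \<and> FB \<subseteq> F' \<longrightarrow> S' = B \<and> F' = FB"
  have "two_connected (S \<union> B) (F \<union> FB)" using union_2c[OF assms(3) tc assms(4) assms(5) assms(7) assms(6) assms(8)] .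
  moreover have "subgraph (S \<union> B) (F \<union> FB) V E" using sb assms(2) unfolding subgraph_def by auto
  ultimately have "S \<union> B = B" using mx by blast
  then show ?thesis by auto
next
  fix x y
  assume "bridge V E x y" "B = {x, y}"
  then show ?thesis using bridge_no2c[of V E x y S F] assms by auto
qed

lemma block_props:
  assumes "simple_graph V E" "is_block V E B"
  shows "B \<subseteq> V \<and> (\<forall>a\<in>B. \<forall>b\<in>B. cn E B a b) \<and>
    (\<forall>v\<in>B. \<forall>a\<in>B - {v}. \<forall>b\<in>B - {v}. cn E (B - {v}) a b)"
  using assms(2) unfolding is_block_def
proof (elim disjE exE conjE)
  fix FB
  assume sb: "subgraph B FB V E" and tc: "two_connected B FB"
  have 1: "B \<subseteq> V" using sb unfolding subgraph_def by auto
  have 2: "\<forall>v\<in>B. \<forall>a\<in>B - {v}. \<forall>b\<in>B - {v}. cn E (B - {v}) a b"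
    using sub2c_cn[OF sb tc] by blast
  have "connected_graph B FB" using tc unfolding two_connected_def by auto
  then have "cn FB B a b" if "a \<in> B" "b \<in> B" for a b using that unfolding connected_graph_def cn_def by auto
  then have 3: "\<forall>a\<in>B. \<forall>b\<in>B. cn E B a b" using sb unfolding subgraph_def by (metis cn_mono order_refl)
  show ?thesis using 1 2 3 by blast
next
  fix x y
  assume br: "bridge V E x y" "B = {x, y}"
  then have e: "{x, y} \<in> E" unfolding bridge_def by auto
  then obtain p q where "p \<noteq> q" "p \<in> V" "q \<in> V" "{x, y} = {p, q}"
    using assms(1) unfolding simple_graph_def by blast
  then have 1: "B \<subseteq> V" using br by (auto simp: doubleton_eq_iff)
  have "cn E B x y" using e br by (auto intro: cn_edge)
  then have 2: "\<forall>a\<in>B. \<forall>b\<in>B. cn E B a b" using br cn_sym by auto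
  have 3: "\<forall>v\<in>B. \<forall>a\<in>B - {v}. \<forall>b\<in>B - {v}. cn E (B - {v}) a b"
    using br by auto
  show ?thesis using 1 2 3 by blast
qed

lemma block_card:
  assumes "is_block V E B" shows "(\<exists>a b. a \<noteq> b \<and> a \<in> B \<and> b \<in> B) \<and> finite B"
  using assms unfolding is_block_def
proof (elim disjE exE conjE)
  fix FB assume "two_connected B FB"
  then have c: "card B \<ge> 3" unfolding two_connected_def by auto
  then have f: "finite B" using card.infinite by fastforce
  have "\<not> B \<subseteq> {}" using c by auto
  then obtain a where a: "a \<in> B" by auto
  have "\<not> B \<subseteq> {a}" using c card_mono[of "{a}" B] by auto
  then show ?thesis using a f by auto
next
  fix x y assume br: "bridge V E x y" "B = {x, y}"
  then have "x \<noteq> y" unfolding bridge_def by auto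
  then show ?thesis using br by auto
qed

lemma card2: "card {x, y} \<le> 2"
  by (cases "x = y") auto

lemma blocks_eq:
  assumes "is_block V E B1" "is_block V E B2" "a \<noteq> b" "a \<in> B1" "b \<in> B1" "a \<in> B2" "b \<in> B2"
  shows "B1 = B2"
proof -
  have one: "B1 \<subseteq> B2" if "is_block V E B1" "is_block V E B2" "a \<in> B1" "b \<in> B1" "a \<in> B2" "b \<in> B2"
    "\<exists>F. subgraph B1 F V E \<and> two_connected B1 F" for B1 B2
    using L[OF that(2) _ _ assms(3)] that by blast
  have br: "\<exists>x y. bridge V E x y \<and> B = {x, y}" if "is_block V E B"
    "\<not> (\<exists>F. subgraph B F V E \<and> two_connected B F)" for B
    using that unfolding is_block_def by blast
  have c3: "card B \<ge> 3" if "two_connected B F" for B F using that unfolding two_connected_def by auto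
  show ?thesis
  proof (cases "\<exists>F. subgraph B1 F V E \<and> two_connected B1 F")
    case T1: True
    show ?thesis
    proof (cases "\<exists>F. subgraph B2 F V E \<and> two_connected B2 F")
      case True
      then show ?thesis using one[OF assms(1,2,4-7) T1] one[OF assms(2,1,6,7,4,5) True] by auto
    next
      case False
      then obtain x y where "B2 = {x, y}" using br assms(2) by blast
      moreover have "B1 \<subseteq> B2" using one[OF assms(1,2,4-7) T1] .
      moreover obtain F where "two_connected B1 F" using T1 by blast
      ultimately have "card B1 \<le> card {x, y}" "card B1 \<ge> 3" using c3 card_mono[of "{x,y}" B1] by auto
      then have False using card2[of x y] by linarith
      then show ?thesis ..
    qed
  next
    case F1: False
    then obtain x y where b1: "B1 = {x, y}" using br assms(1) by blast
    show ?thesis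
    proof (cases "\<exists>F. subgraph B2 F V E \<and> two_connected B2 F")
      case True
      have "B2 \<subseteq> B1" using one[OF assms(2,1,6,7,4,5) True] .
      moreover obtain F where "two_connected B2 F" using True by blast
      ultimately have "card B2 \<le> card {x, y}" "card B2 \<ge> 3" using c3 card_mono[of "{x,y}" B2] b1 by auto
      then have False using card2[of x y] by linarith
      then show ?thesis ..
    next
      case False
      then obtain x' y' where "B2 = {x', y'}" using br assms(2) by blast
      then show ?thesis using b1 assms by auto
    qed
  qed
qed

lemma ex_max:
  assumes "finite V" "finite E" "subgraph S0 F0 V E" "two_connected S0 F0"
  shows "\<exists>B. is_block V E B \<and> S0 \<subseteq> B"
proof -
  define C where "C = {(S, F). subgraph S F V E \<and> two_connected S F \<and> S0 \<subseteq> S \<and> F0 \<subseteq> F}"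
  have "C \<subseteq> Pow V \<times> Pow E" unfolding C_def subgraph_def by auto
  then have fin: "finite C" using assms(1,2) finite_subset by blast
  have ne: "(S0, F0) \<in> C" using assms unfolding C_def by auto
  define f where "f = (\<lambda>(S::'a set, F::'a set set). card S + card F)"
  have "Max (f ` C) \<in> f ` C" using fin ne by (intro Max_in) auto
  then obtain B FB where p: "(B, FB) \<in> C" "f (B, FB) = Max (f ` C)" by auto
  have le: "f q \<le> f (B, FB)" if "q \<in> C" for q using p(2) fin that by (simp add: Max_ge)
  have "is_block V E B"
    unfolding is_block_def
  proof (rule disjI1, rule exI[of _ FB], intro conjI allI impI)
    show "subgraph B FB V E" "two_connected B FB" using p(1) unfolding C_def by auto
    fix S' F' assume h: "subgraph S' F' V E \<and> two_connected S' F' \<and> B \<subseteq> S' \<and> FB \<subseteq> F'"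
    then have "(S', F') \<in> C" using p(1) unfolding C_def by auto
    then have "card S' + card F' \<le> card B + card FB" using le unfolding f_def by fastforce
    moreover have fs: "finite S'" "finite F'" using h assms(1,2) finite_subset unfolding subgraph_def by blast+
    moreover have "card B \<le> card S'" "card FB \<le> card F'" using h fs card_mono by auto
    ultimately have "card B = card S'" "card FB = card F'" by auto
    then show "S' = B" "F' = FB" using h fs card_subset_eq by metis+
  qed
  then show ?thesis using p(1) unfolding C_def by auto
qed

lemma path_mem:
  assumes "\<forall>i. Suc i < length ps \<longrightarrow> (\<lambda>a b. {a, b} \<in> E \<and> a \<in> S \<and> b \<in> S) (ps!i) (ps!Suc i)"
    "ps!0 \<in> S" "l < length ps"
  shows "ps!l \<in> S"
  using assms by (cases l) auto

lemma seg:
  assumes "\<forall>l. Suc l < length ps \<longrightarrow> {ps!l, ps!Suc l} \<in> E"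
    "\<forall>l. j \<le> l \<and> l \<le> j' \<longrightarrow> ps!l \<in> T" "j \<le> j'" "j' < length ps"
  shows "cn E T (ps!j) (ps!j')"
  unfolding cn_def
  by (rule chain_conn) (use assms in auto)

lemma edge_block:
  assumes sg: "simple_graph V E" and e: "{x, u} \<in> E"
  shows "\<exists>B. is_block V E B \<and> x \<in> B \<and> u \<in> B"
proof -
  obtain p q where pq: "p \<noteq> q" "p \<in> V" "q \<in> V" "{x, u} = {p, q}"
    using sg e unfolding simple_graph_def by blast
  then have xu: "x \<noteq> u" "x \<in> V" "u \<in> V" by (auto simp: doubleton_eq_iff)
  have finV: "finite V" using sg unfolding simple_graph_def by auto
  have "E \<subseteq> Pow V" using sg unfolding simple_graph_def by auto
  then have finE: "finite E" using finV finite_subset by blast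
  show ?thesis
  proof (cases "bridge V E x u")
    case True
    then show ?thesis unfolding is_block_def by blast
  next
    case False
    let ?R = "\<lambda>a b. {a, b} \<in> E - {{x, u}} \<and> a \<in> V \<and> b \<in> V"
    have "?R\<^sup>*\<^sup>* x u" using False e unfolding bridge_def by auto
    then obtain ps where ps: "ps \<noteq> []" "ps!0 = x" "last ps = u" "distinct ps"
      "\<forall>i. Suc i < length ps \<longrightarrow> ?R (ps!i) (ps!Suc i)" by (rule get_path)
    define n where "n = length ps"
    have lastn: "ps!(n - 1) = u" using ps(1,3) last_idx n_def by metis
    have n2: "n \<ge> 2"
    proof (rule ccontr)
      assume "\<not> n \<ge> 2"
      moreover have "n \<noteq> 0" using ps(1) n_def by auto
      ultimately have "n = 1" by arith
      then show False using lastn ps(2) xu by auto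
    qed
    have n3: "n \<ge> 3"
    proof (rule ccontr)
      assume "\<not> n \<ge> 3"
      then have "n = 2" using n2 by auto
      then have "?R (ps!0) (ps!1)" using ps(5) n_def by auto
      moreover have "ps!1 = u" using lastn \<open>n = 2\<close> by auto
      ultimately show False using ps(2) by auto
    qed
    have ch: "\<forall>l. Suc l < length ps \<longrightarrow> {ps!l, ps!Suc l} \<in> E" using ps(5) by auto
    have inV: "ps!l \<in> V" if "l < n" for l
    proof (cases l)
      case 0 then show ?thesis using ps(2) xu by auto
    next
      case (Suc m) then show ?thesis using ps(5) that n_def by auto
    qed
    define S where "S = set ps"
    have SV: "S \<subseteq> V" using inV unfolding S_def n_def by (auto simp: in_set_conv_nth)
    have cS: "card S \<ge> 3" using n3 distinct_card[OF ps(4)] unfolding S_def n_def by auto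
    have dc: "cn E (S - {v}) a b" if v: "v \<in> S" and a: "a \<in> S - {v}" and b: "b \<in> S - {v}" for v a b
    proof -
      obtain i where i: "i < n" "ps!i = v" using v unfolding S_def n_def by (auto simp: in_set_conv_nth)
      define base where "base = (if i = 0 then u else x)"
      have ne: "ps!l \<noteq> v" if "l < n" "l \<noteq> i" for l
        using ps(4) i that unfolding n_def by (metis nth_eq_iff_index_eq)
      have toB: "cn E (S - {v}) w base" if w: "w \<in> S - {v}" for w
      proof -
        obtain j where j: "j < n" "ps!j = w" using w unfolding S_def n_def by (auto simp: in_set_conv_nth)
        have "j \<noteq> i" using j i w by auto
        show ?thesis
        proof (cases "j < i")
          case True
          have "cn E (S - {v}) (ps!0) (ps!j)"
            by (rule seg[OF ch]) (use ne True j i in \<open>auto simp: S_def n_def\<close>)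
          then show ?thesis using True j ps(2) cn_sym unfolding base_def by auto
        next
          case False
          then have ji: "i < j" using \<open>j \<noteq> i\<close> by auto
          have 1: "cn E (S - {v}) (ps!j) (ps!(n - 1))"
            by (rule seg[OF ch]) (use ne ji j i in \<open>auto simp: S_def n_def\<close>)
          show ?thesis
          proof (cases "i = 0")
            case True then show ?thesis using 1 lastn j unfolding base_def by auto
          next
            case False
            have "ps!0 \<noteq> v" "ps!(n - 1) \<noteq> v" using ne False ji j n3 by auto
            then have "cn E (S - {v}) u x" using e lastn ps(2) ps(1) S_def n_def
              by (intro cn_edge) (auto simp: insert_commute last_in_set)
            then show ?thesis using 1 lastn j False cn_trans unfolding base_def by auto
          qed
        qed
      qed
      show ?thesis using toB[OF a] toB[OF b] cn_sym cn_trans by metis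
    qed
    have "subgraph S {e \<in> E. e \<subseteq> S} V E \<and> two_connected S {e \<in> E. e \<subseteq> S}"
      using TC[OF SV cS] dc by blast
    then obtain B where "is_block V E B" "S \<subseteq> B" using ex_max[OF finV finE] by blast
    moreover have "x \<in> S" "u \<in> S" using ps(1,2,3) unfolding S_def by (auto simp: last_in_set)
    ultimately show ?thesis by auto
  qed
qed

definition NR :: "'a set \<Rightarrow> 'a set set \<Rightarrow> 'a \<Rightarrow> 'a \<Rightarrow> 'a set \<Rightarrow> bool" where
  "NR V E r x B \<longleftrightarrow> x \<in> B \<and> x \<noteq> r \<and> (\<exists>y\<in>B. y \<noteq> x \<and> cn E (V - {x}) y r)"

lemma blk_del:
  assumes "simple_graph V E" "is_block V E B" "a \<in> B - {v}" "b \<in> B - {v}"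
  shows "cn E (B - {v}) a b"
proof (cases "v \<in> B")
  case True then show ?thesis using block_props[OF assms(1,2)] assms(3,4) by blast
next
  case False then show ?thesis using block_props[OF assms(1,2)] assms(3,4) by auto
qed

lemma R1:
  assumes sg: "simple_graph V E" and b1: "is_block V E B1" and b2: "is_block V E B2"
    and n1: "NR V E r x B1" and n2: "NR V E r x B2"
  shows "B1 = B2"
proof -
  obtain y1 where y1: "y1 \<in> B1" "y1 \<noteq> x" "cn E (V - {x}) y1 r" using n1 unfolding NR_def by auto
  obtain y2 where y2: "y2 \<in> B2" "y2 \<noteq> x" "cn E (V - {x}) y2 r" using n2 unfolding NR_def by auto
  have x1: "x \<in> B1" and x2: "x \<in> B2" using n1 n2 unfolding NR_def by auto
  have B1V: "B1 \<subseteq> V" and B2V: "B2 \<subseteq> V" using block_props[OF sg b1] block_props[OF sg b2] by auto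
  show ?thesis
  proof (cases "y1 = y2")
    case True
    then show ?thesis using blocks_eq[OF b1 b2 y1(2)[symmetric]] x1 x2 y1 y2 by auto
  next
    case False
    have "cn E (V - {x}) y1 y2" using cn_trans[OF y1(3) cn_sym[OF y2(3)]] .
    then obtain ps where ps: "ps \<noteq> []" "ps!0 = y1" "last ps = y2" "distinct ps"
      "\<forall>i. Suc i < length ps \<longrightarrow> (\<lambda>a b. {a, b} \<in> E \<and> a \<in> V - {x} \<and> b \<in> V - {x}) (ps!i) (ps!Suc i)"
      unfolding cn_def by (rule get_path)
    define n where "n = length ps"
    have lastn: "ps!(n - 1) = y2" using ps(1,3) last_idx n_def by metis
    have ch: "\<forall>l. Suc l < length ps \<longrightarrow> {ps!l, ps!Suc l} \<in> E" using ps(5) by auto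
    have n0: "n > 0" using ps(1) n_def by auto
  have idx: "\<And>l. l \<le> n - 1 \<Longrightarrow> l < n" using n0 by arith
    have idx: "\<And>l. l \<le> n - 1 \<Longrightarrow> l < n" using n0 by arith
    have pin: "ps!l \<in> V - {x}" if "l < n" for l
      using path_mem[OF ps(5)] that ps(2) y1 B1V unfolding n_def by auto
    define H where "H = B1 \<union> B2 \<union> set ps"
    have HV: "H \<subseteq> V" using B1V B2V pin unfolding H_def n_def by (auto simp: in_set_conv_nth)
    have finH: "finite H" using HV sg finite_subset unfolding simple_graph_def by blast
    have y1H: "y1 \<in> H" and y2H: "y2 \<in> H" using y1 y2 unfolding H_def by auto
    have "card {x, y1, y2} = 3" using False y1 y2 by auto
    then have cH: "card H \<ge> 3" using card_mono[OF finH, of "{x, y1, y2}"] x1 y1H y2H unfolding H_def by auto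
    have psH: "set ps \<subseteq> H" unfolding H_def by auto
    have dc: "cn E (H - {v}) a b" if v: "v \<in> H" and a: "a \<in> H - {v}" and b: "b \<in> H - {v}" for v a b
    proof -
      define base where "base = (if v = x then y1 else x)"
      have fromB1: "cn E (H - {v}) w base" if w: "w \<in> B1 - {v}" for w
      proof -
        have "base \<in> B1 - {v}" using x1 y1 unfolding base_def by auto
        then have "cn E (B1 - {v}) w base" using blk_del[OF sg b1] w by blast
        then show ?thesis by (rule cn_mono) (auto simp: H_def)
      qed
      have pathall: "cn E (H - {x}) y1 y2"
      proof -
        have "cn E (H - {x}) (ps!0) (ps!(n - 1))"
          by (rule seg[OF ch]) (use pin psH ps(1) idx nth_mem in \<open>auto simp: n_def\<close>)
        then show ?thesis using ps(2) lastn by simp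
      qed
      have fromB2: "cn E (H - {v}) w base" if w: "w \<in> B2 - {v}" for w
      proof (cases "v = x")
        case True
        have "cn E (B2 - {v}) w y2" using blk_del[OF sg b2] w y2 True by blast
        then have "cn E (H - {v}) w y2" by (rule cn_mono) (auto simp: H_def)
        then show ?thesis using cn_trans[OF _ cn_sym[OF pathall]] True unfolding base_def by auto
      next
        case False
        have "cn E (B2 - {v}) w x" using blk_del[OF sg b2] w x2 False by blast
        then show ?thesis using False unfolding base_def by (rule_tac cn_mono) (auto simp: H_def)
      qed
      have fromP: "cn E (H - {v}) w base" if w: "w \<in> set ps - {v}" for w
      proof -
        obtain j where j: "j < n" "ps!j = w" using w unfolding n_def by (auto simp: in_set_conv_nth)
        show ?thesis
        proof (cases "v \<in> set ps")
          case False
          have "cn E (H - {v}) (ps!0) (ps!j)"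
            by (rule seg[OF ch]) (use False psH j idx nth_mem in \<open>auto simp: n_def\<close>)
          moreover have "y1 \<in> set ps" using ps(1,2) by (metis nth_mem length_greater_0_conv)
          then have "y1 \<in> B1 - {v}" using y1 False by auto
          then have "cn E (H - {v}) y1 base" by (rule fromB1)
          ultimately show ?thesis using ps(2) j cn_sym[of E "H - {v}" y1 w] cn_trans[of E "H - {v}" w y1 base] by auto
        next
          case True
          then obtain i where i: "i < n" "ps!i = v" unfolding n_def by (auto simp: in_set_conv_nth)
          have vx: "v \<noteq> x" using pin i by auto
          have ne: "ps!l \<noteq> v" if "l < n" "l \<noteq> i" for l
            using ps(4) i that unfolding n_def by (metis nth_eq_iff_index_eq)
          have "j \<noteq> i" using j i w by auto
          show ?thesis
          proof (cases "j < i")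
            case True
            have "cn E (H - {v}) (ps!0) (ps!j)"
              by (rule seg[OF ch]) (use ne True j i psH idx nth_mem in \<open>auto simp: n_def\<close>)
            moreover have "y1 \<in> B1 - {v}" using ne[of 0] True ps(2) y1 i by auto
            then have "cn E (H - {v}) y1 base" using fromB1 by blast
            ultimately show ?thesis using ps(2) j cn_sym[of E "H - {v}" y1 w] cn_trans[of E "H - {v}" w y1 base] by auto
          next
            case False
            then have ji: "i < j" using \<open>j \<noteq> i\<close> by auto
            have "cn E (H - {v}) (ps!j) (ps!(n - 1))"
              by (rule seg[OF ch]) (use ne ji j i psH idx nth_mem in \<open>auto simp: n_def\<close>)
            moreover have "y2 \<in> B2 - {v}" using ne[of "n - 1"] ji j lastn y2 by auto
            then have "cn E (H - {v}) y2 base" using fromB2 by blast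
            ultimately show ?thesis using lastn j cn_trans[of E "H - {v}" w y2 base] by auto
          qed
        qed
      qed
      have all: "cn E (H - {v}) w base" if "w \<in> H - {v}" for w
      proof -
        have "w \<in> B1 - {v} \<or> w \<in> B2 - {v} \<or> w \<in> set ps - {v}" using that unfolding H_def by blast
        then show ?thesis using fromB1 fromB2 fromP by blast
      qed
      show ?thesis using cn_trans[OF all[OF a] cn_sym[OF all[OF b]]] .
    qed
    have tc: "subgraph H {e \<in> E. e \<subseteq> H} V E \<and> two_connected H {e \<in> E. e \<subseteq> H}"
      using TC[OF HV cH] dc by blast
    have "H \<subseteq> B2" using L[OF b2, of H "{e \<in> E. e \<subseteq> H}" x y2] tc y2 x2 unfolding H_def by auto
    then have "y1 \<in> B2" using y1H by auto
    then show ?thesis using blocks_eq[OF b1 b2 y1(2)[symmetric]] x1 x2 y1 by auto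
  qed
qed

lemma R2:
  assumes sg: "simple_graph V E" and b: "is_block V E B" and ab: "a \<in> B" "b \<in> B" "a \<noteq> b"
    and na: "\<not> NR V E r a B" and nb: "\<not> NR V E r b B" and w: "w \<in> B" "cn E V w r"
  shows False
proof -
  have BV: "B \<subseteq> V" using block_props[OF sg b] by auto
  have ar: "a \<noteq> r"
  proof
    assume "a = r"
    then have "NR V E r b B" unfolding NR_def using ab by auto
    then show False using nb by auto
  qed
  have br: "b \<noteq> r"
  proof
    assume "b = r"
    then have "NR V E r a B" unfolding NR_def using ab by auto
    then show False using na by auto
  qed
  have "cn E B a w" using block_props[OF sg b] ab w by auto
  then have "cn E V a w" by (rule cn_mono) (use BV in auto)
  then have "cn E V a r" using w cn_trans by metis
  then obtain ps where ps: "ps \<noteq> []" "ps!0 = a" "last ps = r" "distinct ps"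
      "\<forall>i. Suc i < length ps \<longrightarrow> (\<lambda>a b. {a, b} \<in> E \<and> a \<in> V \<and> b \<in> V) (ps!i) (ps!Suc i)"
      unfolding cn_def by (rule get_path)
  define n where "n = length ps"
  have lastn: "ps!(n - 1) = r" using ps(1,3) last_idx n_def by metis
  have ch: "\<forall>l. Suc l < length ps \<longrightarrow> {ps!l, ps!Suc l} \<in> E" using ps(5) by auto
  have pin: "ps!l \<in> V" if "l < n" for l
    using path_mem[OF ps(5)] that ps(2) ab BV unfolding n_def by auto
  have n0: "n > 0" using ps(1) n_def by auto
  have idx: "\<And>l. l \<le> n - 1 \<Longrightarrow> l < n" using n0 by arith
  show False
  proof (cases "b \<in> set ps")
    case False
    have "cn E (V - {b}) (ps!0) (ps!(n - 1))"
      by (rule seg[OF ch]) (use pin False n0 idx nth_mem in \<open>auto simp: n_def\<close>)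
    then have "NR V E r b B" unfolding NR_def using ab ps(2) lastn br by auto
    then show False using nb by auto
  next
    case True
    then obtain i where i: "i < n" "ps!i = b" unfolding n_def by (auto simp: in_set_conv_nth)
    have ne: "ps!l \<noteq> a" if "l < n" "l \<noteq> 0" for l
      using ps(4) ps(2) that n0 unfolding n_def by (metis nth_eq_iff_index_eq)
    have "i \<noteq> 0"
    proof
      assume "i = 0" then show False using i ps(2) ab by auto
    qed
    have "cn E (V - {a}) (ps!i) (ps!(n - 1))"
      by (rule seg[OF ch]) (use pin ne i \<open>i \<noteq> 0\<close> idx nth_mem in \<open>auto simp: n_def\<close>)
    then have "NR V E r a B" unfolding NR_def using ab i lastn ar by auto
    then show False using na by auto
  qed
qed

definition pg :: "'a set set \<Rightarrow> 'a set \<Rightarrow> ('a \<Rightarrow> nat) \<Rightarrow> bool" where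
  "pg E W c \<longleftrightarrow> (\<forall>v\<in>W. 1 \<le> c v) \<and> (\<forall>x\<in>W. \<forall>y\<in>W. {x, y} \<in> E \<longrightarrow> c x \<noteq> c y) \<and>
     (\<forall>v\<in>W. \<forall>i. 1 \<le> i \<and> i < c v \<longrightarrow> (\<exists>u\<in>W. {u, v} \<in> E \<and> c u = i))"

lemma extend_step:
  assumes fin: "finite V" and W: "W \<subseteq> V" and p: "pg E W c" and nl: "\<forall>x. {x, x} \<notin> E"
    and v: "v \<in> V" "v \<notin> W"
  shows "\<exists>c1. pg E (insert v W) c1 \<and> (\<forall>w\<in>W. c1 w = c w)"
proof -
  define P where "P = (\<lambda>i. 1 \<le> i \<and> (\<forall>u\<in>W. {u, v} \<in> E \<longrightarrow> c u \<noteq> i))"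
  define mm where "mm = (LEAST i. P i)"
  have finW: "finite W" using fin W finite_subset by blast
  define i0 where "i0 = Suc (Max (insert 0 (c ` W)))"
  have "c u < i0" if "u \<in> W" for u
    using finW that unfolding i0_def by (simp add: le_imp_less_Suc)
  then have "P i0" unfolding P_def i0_def by fastforce
  then have Pm: "P mm" unfolding mm_def by (rule LeastI)
  have Qm: "\<not> P i" if "i < mm" for i using that not_less_Least unfolding mm_def by blast
  define c1 where "c1 = c(v := mm)"
  have agree: "\<forall>w\<in>W. c1 w = c w" using v unfolding c1_def by auto
  have "pg E (insert v W) c1"
    unfolding pg_def
  proof (intro conjI ballI allI impI)
    fix w assume "w \<in> insert v W"
    then show "1 \<le> c1 w" using Pm p agree unfolding P_def pg_def c1_def by auto
  next
    fix x y assume x: "x \<in> insert v W" and y: "y \<in> insert v W" and e: "{x, y} \<in> E"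
    show "c1 x \<noteq> c1 y"
    proof (cases "x = v")
      case True
      show ?thesis
      proof (cases "y = v")
        case True then show ?thesis using \<open>x = v\<close> e nl by auto
      next
        case False
        then have "y \<in> W" using y by auto
        moreover have "{y, v} \<in> E" using e \<open>x = v\<close> by (simp add: insert_commute)
        ultimately have "c y \<noteq> mm" using Pm unfolding P_def by auto
        then show ?thesis using \<open>x = v\<close> False unfolding c1_def by auto
      qed
    next
      case False
      then have xW: "x \<in> W" using x by auto
      show ?thesis
      proof (cases "y = v")
        case True
        then have "{x, v} \<in> E" using e by simp
        then have "c x \<noteq> mm" using Pm xW unfolding P_def by auto
        then show ?thesis using True False unfolding c1_def by auto
      next
        case False
        then have "y \<in> W" using y by auto
        then show ?thesis using p xW e agree unfolding pg_def by auto
      qed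
    qed
  next
    fix w i assume w: "w \<in> insert v W" and i: "1 \<le> i \<and> i < c1 w"
    show "\<exists>u\<in>insert v W. {u, w} \<in> E \<and> c1 u = i"
    proof (cases "w = v")
      case True
      then have "i < mm" using i unfolding c1_def by auto
      then have "\<not> P i" by (rule Qm)
      then obtain u where "u \<in> W" "{u, v} \<in> E" "c u = i" using i unfolding P_def by auto
      then show ?thesis using True agree by auto
    next
      case False
      then have "w \<in> W" "c1 w = c w" using w agree by auto
      then have "\<exists>u\<in>W. {u, w} \<in> E \<and> c u = i" using p i unfolding pg_def by auto
      then obtain u where "u \<in> W" "{u, w} \<in> E" "c u = i" by blast
      then show ?thesis using agree by auto
    qed
  qed
  then show ?thesis using agree by blast
qed

lemma extend:
  assumes fin: "finite V" and nl: "\<forall>x. {x, x} \<notin> E"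
  shows "W \<subseteq> V \<Longrightarrow> pg E W c \<Longrightarrow> \<exists>c'. pg E V c' \<and> (\<forall>w\<in>W. c' w = c w)"
proof (induction "card (V - W)" arbitrary: W c)
  case 0
  then have "V - W = {}" using fin by auto
  then have "W = V" using 0 by auto
  then show ?case using 0 by auto
next
  case (Suc m)
  then have "V - W \<noteq> {}" by auto
  then obtain v where v: "v \<in> V" "v \<notin> W" by auto
  obtain c1 where c1: "pg E (insert v W) c1" "\<forall>w\<in>W. c1 w = c w"
    using extend_step[OF fin Suc.prems(1) Suc.prems(2) nl v] by blast
  have "card (V - insert v W) = m"
  proof -
    have "V - insert v W = (V - W) - {v}" by auto
    then show ?thesis using Suc.hyps(2) v fin by auto
  qed
  then obtain c' where "pg E V c'" "\<forall>w\<in>insert v W. c' w = c1 w"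
    using Suc.hyps(1)[of "insert v W" c1] c1 Suc.prems v by auto
  then show ?case using c1 by auto
qed

lemma pg_full:
  assumes p: "pg E V c" and ne: "V \<noteq> {}" and fin: "finite V"
    and ev: "\<forall>x y. {x, y} \<in> E \<longrightarrow> x \<in> V \<and> y \<in> V"
  shows "grundy_coloring V E c (Max (c ` V))"
proof -
  let ?M = "Max (c ` V)"
  have M: "?M \<in> c ` V" using ne fin by (intro Max_in) auto
  then obtain v0 where v0: "v0 \<in> V" "c v0 = ?M" by auto
  show ?thesis
    unfolding grundy_coloring_def
  proof (intro conjI ballI allI impI)
    fix v assume "v \<in> V"
    then show "c v \<in> {1..?M}" using p fin unfolding pg_def by auto
  next
    fix i assume i: "i \<in> {1..?M}"
    show "\<exists>v\<in>V. c v = i"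
    proof (cases "i = ?M")
      case True then show ?thesis using v0 by auto
    next
      case False
      then have "1 \<le> i \<and> i < c v0" using i v0 by auto
      then show ?thesis using p v0 unfolding pg_def by fastforce
    qed
  next
    fix x y assume "{x, y} \<in> E"
    then show "c x \<noteq> c y" using ev p unfolding pg_def by blast
  next
    fix v i assume "v \<in> V" "1 \<le> i \<and> i < c v"
    then show "\<exists>u\<in>V. {u, v} \<in> E \<and> c u = i" using p unfolding pg_def by blast
  qed
qed

lemma gc_bound:
  assumes "grundy_coloring V E c k" "finite V"
  shows "k \<le> card V"
proof -
  have "{1..k} \<subseteq> c ` V" using assms(1) unfolding grundy_coloring_def by fastforce
  then have "card {1..k} \<le> card (c ` V)" using assms(2) by (intro card_mono) auto
  also have "\<dots> \<le> card V" using assms(2) by (rule card_image_le)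
  finally show ?thesis by simp
qed

lemma gc_exists:
  assumes fin: "finite V" and nl: "\<forall>x. {x, x} \<notin> E"
    and ev: "\<forall>x y. {x, y} \<in> E \<longrightarrow> x \<in> V \<and> y \<in> V"
  shows "\<exists>c k. grundy_coloring V E c k"
proof (cases "V = {}")
  case True
  have "grundy_coloring V E (\<lambda>_. 0) 0" using True ev unfolding grundy_coloring_def by auto
  then show ?thesis by blast
next
  case False
  have "pg E {} (\<lambda>_. 0)" unfolding pg_def by auto
  then obtain c' where "pg E V c'" using extend[OF fin nl] by blast
  then show ?thesis using pg_full[OF _ False fin ev] by blast
qed

lemma bc_edge:
  assumes sg: "simple_graph V E" and e: "{x, y} \<in> block_closure V E"
  shows "x \<in> V \<and> y \<in> V \<and> x \<noteq> y \<and> ({x, y} \<in> E \<or> (\<exists>B. is_block V E B \<and> x \<in> B \<and> y \<in> B))"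
proof (cases "{x, y} \<in> E")
  case True
  then obtain p q where "p \<noteq> q" "p \<in> V" "q \<in> V" "{x, y} = {p, q}"
    using sg unfolding simple_graph_def by blast
  then show ?thesis using True by (auto simp: doubleton_eq_iff)
next
  case False
  then obtain x' y' B where h: "{x, y} = {x', y'}" "x' \<noteq> y'" "is_block V E B" "x' \<in> B" "y' \<in> B"
    using e unfolding block_closure_def by blast
  then have "x \<in> B" "y \<in> B" "x \<noteq> y" by (auto simp: doubleton_eq_iff)
  moreover have "B \<subseteq> V" using block_props[OF sg h(3)] by auto
  ultimately show ?thesis using h(3) by auto
qed

lemma bc_intro:
  "x \<noteq> y \<Longrightarrow> is_block V E B \<Longrightarrow> x \<in> B \<Longrightarrow> y \<in> B \<Longrightarrow> {x, y} \<in> block_closure V E"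
  unfolding block_closure_def by blast

definition rep :: "'a set \<Rightarrow> 'a set set \<Rightarrow> ('a \<Rightarrow> nat) \<Rightarrow> 'a \<Rightarrow> 'a set \<Rightarrow> nat \<Rightarrow> 'a" where
  "rep V E c r B i = (SOME y. y \<in> B \<and> NR V E r y B \<and> c y = i)"

inductive kept :: "'a set \<Rightarrow> 'a set set \<Rightarrow> ('a \<Rightarrow> nat) \<Rightarrow> 'a \<Rightarrow> 'a \<Rightarrow> bool"
  for V E c r where
  kroot: "kept V E c r r"
| kstep: "is_block V E B \<Longrightarrow> NR V E r x B \<Longrightarrow> a \<in> B \<Longrightarrow> kept V E c r a \<Longrightarrow> \<not> NR V E r a B \<Longrightarrow>
     c x \<noteq> c a \<Longrightarrow> x = rep V E c r B (c x) \<Longrightarrow> kept V E c r x"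

lemma main:
  assumes sg: "simple_graph V E" and gc: "grundy_coloring V E c k" and k1: "k \<ge> 1"
  shows "\<exists>c' k'. grundy_coloring V (block_closure V E) c' k' \<and> k \<le> k'"
proof -
  have "k \<in> {1..k}" using k1 by auto
  then obtain r where r: "r \<in> V" "c r = k" using gc unfolding grundy_coloring_def by blast
  have finV: "finite V" using sg unfolding simple_graph_def by auto
  let ?K = "{x. kept V E c r x}"
  let ?E' = "block_closure V E"
  have kV: "x \<in> V" if "kept V E c r x" for x
    using that
  proof cases
    case kroot then show ?thesis using r by auto
  next
    case (kstep B a)
    then show ?thesis using block_props[OF sg kstep(1)] unfolding NR_def by auto
  qed
  have kreach: "cn E V x r" if "kept V E c r x" for x
    using that
  proof cases
    case kroot then show ?thesis by simp
  next
    case (kstep B a)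
    obtain y where y: "y \<in> B" "cn E (V - {x}) y r" using kstep(2) unfolding NR_def by auto
    have BV: "B \<subseteq> V" using block_props[OF sg kstep(1)] by auto
    have "cn E B x y" using block_props[OF sg kstep(1)] y kstep(2) unfolding NR_def by auto
    then have "cn E V x y" by (rule cn_mono) (use BV in auto)
    moreover have "cn E V y r" using y(2) by (rule cn_mono) auto
    ultimately show ?thesis using cn_trans by metis
  qed
  have parent: "\<exists>a\<in>B. kept V E c r a \<and> \<not> NR V E r a B \<and> c x \<noteq> c a \<and> x = rep V E c r B (c x)"
    if kx: "kept V E c r x" and bB: "is_block V E B" and nx: "NR V E r x B" for x B
    using kx
  proof cases
    case kroot then show ?thesis using nx unfolding NR_def by auto
  next
    case (kstep B1 a)
    have "B1 = B" using R1[OF sg kstep(1) bB kstep(2) nx] .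
    then show ?thesis using kstep by auto
  qed
  have R2': "a = b" if "is_block V E B" "a \<in> B" "b \<in> B" "\<not> NR V E r a B" "\<not> NR V E r b B"
    "w \<in> B" "kept V E c r w" for B a b w
    using R2[OF sg that(1-3) _ that(4,5) that(6) kreach[OF that(7)]] by blast
  have proper: "c x \<noteq> c y" if kx: "kept V E c r x" and ky: "kept V E c r y" and e: "{x, y} \<in> ?E'" for x y
  proof -
    have "{x, y} \<in> E \<or> (x \<noteq> y \<and> (\<exists>B. is_block V E B \<and> x \<in> B \<and> y \<in> B))" using bc_edge[OF sg e] by auto
    then show ?thesis
    proof
      assume "{x, y} \<in> E"
      then show ?thesis using gc unfolding grundy_coloring_def by auto
    next
      assume "x \<noteq> y \<and> (\<exists>B. is_block V E B \<and> x \<in> B \<and> y \<in> B)"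
      then obtain B where xy: "x \<noteq> y" and b: "is_block V E B" "x \<in> B" "y \<in> B" by auto
      show ?thesis
      proof
        assume eq: "c x = c y"
        show False
        proof (cases "NR V E r x B")
          case nx: True
          obtain a where a: "a \<in> B" "kept V E c r a" "\<not> NR V E r a B" "c x \<noteq> c a" "x = rep V E c r B (c x)"
            using parent[OF kx b(1) nx] by auto
          show False
          proof (cases "NR V E r y B")
            case ny: True
            obtain a' where "y = rep V E c r B (c y)" using parent[OF ky b(1) ny] by auto
            then show False using a(5) eq xy by auto
          next
            case False
            then have "a = y" using R2'[OF b(1) a(1) b(3) a(3) False b(2) kx] by auto
            then show False using a(4) eq by auto
          qed
        next
          case nx: False
          show False
          proof (cases "NR V E r y B")
            case ny: True
            obtain a where a: "a \<in> B" "kept V E c r a" "\<not> NR V E r a B" "c y \<noteq> c a"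
              using parent[OF ky b(1) ny] by auto
            then have "a = x" using R2'[OF b(1) a(1) b(2) a(3) nx b(2) kx] by auto
            then show False using a(4) eq by auto
          next
            case False
            then show False using R2'[OF b(1) b(2) b(3) nx False b(2) kx] xy by auto
          qed
        qed
      qed
    qed
  qed
  have grundy: "\<exists>y. kept V E c r y \<and> {y, x} \<in> ?E' \<and> c y = j"
    if kx: "kept V E c r x" and j: "1 \<le> j" "j < c x" for x j
  proof -
    obtain u where u: "u \<in> V" "{u, x} \<in> E" "c u = j"
      using gc kV[OF kx] j unfolding grundy_coloring_def by blast
    obtain B where b: "is_block V E B" "u \<in> B" "x \<in> B" using edge_block[OF sg u(2)] by auto
    obtain a where a: "a \<in> B" "kept V E c r a" "\<not> NR V E r a B"
    proof (cases "NR V E r x B")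
      case True then show ?thesis using parent[OF kx b(1) True] that by auto
    next
      case False then show ?thesis using that b kx by auto
    qed
    show ?thesis
    proof (cases "c a = j")
      case True
      then have "a \<noteq> x" using j by auto
      then have "{a, x} \<in> ?E'" using bc_intro b a by metis
      then show ?thesis using a True by auto
    next
      case False
      have nu: "NR V E r u B"
      proof (rule ccontr)
        assume "\<not> NR V E r u B"
        then have "a = u" using R2'[OF b(1) a(1) b(2) a(3) _ b(3) kx] by auto
        then show False using False u by auto
      qed
      define y where "y = rep V E c r B j"
      have "y \<in> B \<and> NR V E r y B \<and> c y = j"
        unfolding y_def rep_def by (rule someI[of _ u]) (use b nu u in auto)
      then have y: "y \<in> B" "NR V E r y B" "c y = j" by auto
      have "kept V E c r y"
        using kstep[OF b(1) y(2) a(1) a(2) a(3)] y False y_def by auto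
      moreover have "y \<noteq> x" using y j by auto
      then have "{y, x} \<in> ?E'" using bc_intro b y by metis
      ultimately show ?thesis using y by auto
    qed
  qed
  have pgK: "pg ?E' ?K c"
    unfolding pg_def
  proof (intro conjI ballI allI impI)
    fix v assume "v \<in> ?K"
    then show "1 \<le> c v" using kV gc unfolding grundy_coloring_def by fastforce
  next
    fix x y assume "x \<in> ?K" "y \<in> ?K" "{x, y} \<in> ?E'"
    then show "c x \<noteq> c y" using proper by auto
  next
    fix v i assume "v \<in> ?K" "1 \<le> i \<and> i < c v"
    then show "\<exists>u\<in>?K. {u, v} \<in> ?E' \<and> c u = i" using grundy by auto
  qed
  have nl: "\<forall>x. {x, x} \<notin> ?E'" using bc_edge[OF sg] by blast
  have ev: "\<forall>x y. {x, y} \<in> ?E' \<longrightarrow> x \<in> V \<and> y \<in> V" using bc_edge[OF sg] by blast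
  obtain c' where c': "pg ?E' V c'" "\<forall>w\<in>?K. c' w = c w"
    using extend[OF finV nl _ pgK] kV by blast
  have "V \<noteq> {}" using r by auto
  then have g: "grundy_coloring V ?E' c' (Max (c' ` V))" using pg_full[OF c'(1) _ finV ev] by blast
  have "kept V E c r r" by (rule kroot)
  then have "c' r = k" using c'(2) r by auto
  then have "k \<le> Max (c' ` V)" using finV r by (metis Max_ge finite_imageI imageI)
  then show ?thesis using g by blast
qed

theorem proposition7:
  fixes V :: "'a set" and E :: "'a set set"
  assumes "simple_graph V E"
  shows "grundy_number V E \<le> grundy_number V (block_closure V E)"
proof -
  have sg: "simple_graph V E" by (rule assms)
  define A where "A = {k. \<exists>c. grundy_coloring V E c k}"
  define B where "B = {k. \<exists>c. grundy_coloring V (block_closure V E) c k}"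
  have finV: "finite V" using sg unfolding simple_graph_def by auto
  have nlE: "\<forall>x. {x, x} \<notin> E"
  proof (intro allI notI)
    fix x assume "{x, x} \<in> E"
    then obtain p q where "p \<noteq> q" "{x, x} = {p, q}" using sg unfolding simple_graph_def by blast
    then show False by (auto simp: doubleton_eq_iff)
  qed
  have evE: "\<forall>x y. {x, y} \<in> E \<longrightarrow> x \<in> V \<and> y \<in> V"
  proof (intro allI impI)
    fix x y assume "{x, y} \<in> E"
    then obtain p q where "p \<in> V" "q \<in> V" "{x, y} = {p, q}" using sg unfolding simple_graph_def by blast
    then show "x \<in> V \<and> y \<in> V" by (auto simp: doubleton_eq_iff)
  qed
  have "A \<noteq> {}" using gc_exists[OF finV nlE evE] unfolding A_def by auto
  moreover have "A \<subseteq> {..card V}" using gc_bound finV unfolding A_def by auto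
  then have finA: "finite A" using finite_subset by blast
  ultimately have "Max A \<in> A" by (intro Max_in)
  then obtain c where c: "grundy_coloring V E c (Max A)" unfolding A_def by auto
  have "B \<subseteq> {..card V}" using gc_bound finV unfolding B_def by auto
  then have finB: "finite B" using finite_subset by blast
  have "Max A \<le> Max B"
  proof (cases "Max A = 0")
    case True then show ?thesis by simp
  next
    case False
    then obtain c' k' where "grundy_coloring V (block_closure V E) c' k'" "Max A \<le> k'"
      using main[OF sg c] by auto
    then have "k' \<in> B" "Max A \<le> k'" unfolding B_def by auto
    then show ?thesis using finB Max_ge le_trans by blast
  qed
  then show ?thesis unfolding grundy_number_def A_def B_def .
qed

end
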